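(* Let $R$ be a finite commutative ring and let $F_R$ be a unitary operator on the space with orthonormal basis $\{\ket{r}:r\in R\}$ satisfying the control/target inversion property: for all $s\in R$, $(F_R^{\dagger}\otimes F_R)A_s(F_R\otimes F_R^{\dagger})=B_s$, where $A_s\ket{x}\ket{y}=\ket{x}\ket{y+sx}$ and $B_s\ket{x}\ket{y}=\ket{x+sy}\ket{y}$. Let $m\ge1$ and let $F_{R,m}$ be the quantum Fourier transform over the ring $M_m(R)$ of $m\times m$ matrices over $R$ defined from $F_R$. Then for every $S\in M_m(R)$, \[ (F_{R,m}^{\dagger}\otimes F_{R,m})\,L_S\,(F_{R,m}\otimes F_{R,m}^{\dagger}) = R'_S, \] where $L_S\ket{X}\ket{Y}=\ket{X}\ket{Y+SX}$ and $R'_S\ket{X}\ket{Y}=\ket{X+YS}\ket{Y}$ for all $X,Y\in M_m(R)$.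
   Context: A matrix $X=(x_{ij})\in M_m(R)$ is encoded in an $m\times m$ array of $R$-valued registers as the product state $\ket{X}=\bigotimes_{i=1}^m\bigotimes_{j=1}^m\ket{x_{ij}}$ (ordered $x_{11},x_{12},\dots,x_{1m},x_{21},\dots,x_{mm}$). The quantum Fourier transform over $M_m(R)$ is the linear operator $F_{R,m}:\ket{X}\mapsto\bigotimes_{i=1}^m\bigotimes_{j=1}^m F_R\ket{x_{ji}}$, i.e. apply $F_R$ to every register and transpose the array of registers. *)

theory Defs
  imports "HOL-Analysis.Analysis"
begin

text \<open>Linear operators on the finite-dimensional Hilbert space with orthonormal
  basis indexed by a finite type 'a are represented by their matrix entries:
  K y x = <y|K|x>.\<close>

type_synonym 'a qop = "'a \<Rightarrow> 'a \<Rightarrow> complex"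

definition qcomp :: "('a::finite) qop \<Rightarrow> 'a qop \<Rightarrow> 'a qop" (infixl "\<bullet>\<^sub>q" 70) where
  "qcomp A B = (\<lambda>y x. \<Sum>z\<in>UNIV. A y z * B z x)"

definition qid :: "'a qop" where
  "qid = (\<lambda>y x. if y = x then 1 else 0)"

definition qadj :: "'a qop \<Rightarrow> 'a qop" where
  "qadj A = (\<lambda>y x. cnj (A x y))"

definition unitary_op :: "('a::finite) qop \<Rightarrow> bool" where
  "unitary_op U \<longleftrightarrow> qcomp (qadj U) U = qid \<and> qcomp U (qadj U) = qid"

definition qtensor :: "'a qop \<Rightarrow> 'b qop \<Rightarrow> ('a \<times> 'b) qop" where
  "qtensor A B = (\<lambda>(y1, y2) (x1, x2). A y1 x1 * B y2 x2)"

definition basis_op :: "('a \<Rightarrow> 'a) \<Rightarrow> 'a qop" where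
  "basis_op f = (\<lambda>y x. if y = f x then 1 else 0)"

definition A_op :: "'r::comm_ring_1 \<Rightarrow> ('r \<times> 'r) qop" where
  "A_op s = basis_op (\<lambda>(x, y). (x, y + s * x))"

definition B_op :: "'r::comm_ring_1 \<Rightarrow> ('r \<times> 'r) qop" where
  "B_op s = basis_op (\<lambda>(x, y). (x + s * y, y))"

text \<open>Quantum Fourier transform over M_m(R), with matrices X in 'r^'m^'m
  (X $ i $ j = x_ij): |X> \<mapsto> tensor over (i,j) of F_R |x_ji>.\<close>
definition qft_mat :: "('r::finite) qop \<Rightarrow> ('r^'m::finite^'m) qop" where
  "qft_mat F = (\<lambda>Z X. \<Prod>(i, j)\<in>UNIV. F (Z $ i $ j) (X $ j $ i))"

definition L_op :: "('r::comm_ring_1)^'m::finite^'m \<Rightarrow> (('r^'m^'m) \<times> ('r^'m^'m)) qop" where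
  "L_op S = basis_op (\<lambda>(X, Y). (X, Y + S ** X))"

definition R'_op :: "('r::comm_ring_1)^'m::finite^'m \<Rightarrow> (('r^'m^'m) \<times> ('r^'m^'m)) qop" where
  "R'_op S = basis_op (\<lambda>(X, Y). (X + Y ** S, Y))"

end

theory Submission imports Defs begin

lemma ind_mult[simp]: "(if P then 1 else 0) * (v::complex) = (if P then v else 0)" "v * (if P then 1 else 0) = (if P then v else 0)"
  by auto

lemma qcomp_assoc: "qcomp (qcomp A B) C = qcomp A (qcomp (B::('a::finite) qop) C)"
  unfolding qcomp_def
  by (auto simp: sum_distrib_left sum_distrib_right mult.assoc intro!: ext sum.swap)

lemma qcomp_qid_left[simp]: "qcomp qid (A::('a::finite) qop) = A"
  unfolding qcomp_def qid_def by (auto intro!: ext simp: )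

lemma qcomp_qid_right[simp]: "qcomp (A::('a::finite) qop) qid = A"
  unfolding qcomp_def qid_def by (auto intro!: ext simp: )

lemma basis_comp: "bij f \<Longrightarrow> qcomp (basis_op f) (V::('a::finite) qop) = (\<lambda>y x. V (inv f y) x)"
proof (intro ext)
  fix y x assume b: "bij f"
  have "\<And>z. (y = f z) = (z = inv f y)" using b by (metis bij_inv_eq_iff)
  then show "qcomp (basis_op f) V y x = V (inv f y) x"
    unfolding qcomp_def basis_op_def by simp
qed

lemma comp_basis: "qcomp (V::('a::finite) qop) (basis_op g) = (\<lambda>y x. V y (g x))"
  unfolding qcomp_def basis_op_def by (auto intro!: ext simp: )

lemma conj_iff:
  fixes V :: "('a::finite) qop"
  assumes u1: "qcomp (qadj V) V = qid" and u2: "qcomp V (qadj V) = qid" and b: "bij f"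
  shows "(qcomp (qcomp (qadj V) (basis_op f)) V = basis_op g) \<longleftrightarrow> (\<forall>z x. V z x = V (f z) (g x))"
proof -
  have "(qcomp (qcomp (qadj V) (basis_op f)) V = basis_op g) \<longleftrightarrow> qcomp (basis_op f) V = qcomp V (basis_op g)"
  proof
    assume h: "qcomp (qcomp (qadj V) (basis_op f)) V = basis_op g"
    have "qcomp V (qcomp (qcomp (qadj V) (basis_op f)) V) = qcomp (basis_op f) V"
      by (simp add: qcomp_assoc[symmetric] u2)
    then show "qcomp (basis_op f) V = qcomp V (basis_op g)" using h by simp
  next
    assume h: "qcomp (basis_op f) V = qcomp V (basis_op g)"
    show "qcomp (qcomp (qadj V) (basis_op f)) V = basis_op g"
      by (simp add: qcomp_assoc h) (simp add: qcomp_assoc[symmetric] u1)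
  qed
  also have "\<dots> \<longleftrightarrow> (\<forall>y x. V (inv f y) x = V y (g x))"
    by (simp add: basis_comp[OF b] comp_basis fun_eq_iff)
  also have "\<dots> \<longleftrightarrow> (\<forall>z x. V z x = V (f z) (g x))"
    using b by (metis bij_inv_eq_iff)
  finally show ?thesis .
qed

lemma qadj_qadj[simp]: "qadj (qadj A) = A" unfolding qadj_def by simp

lemma qadj_tensor: "qadj (qtensor A B) = qtensor (qadj A) (qadj B)"
  unfolding qadj_def qtensor_def by (auto intro!: ext)

lemma qcomp_tensor: "qcomp (qtensor A B) (qtensor C D) = qtensor (qcomp A C) (qcomp (B::('b::finite) qop) (D::'b qop))"
  for A C :: "('a::finite) qop"
proof (intro ext, clarify)
  fix y1 y2 x1 x2
  have "qcomp (qtensor A B) (qtensor C D) (y1, y2) (x1, x2) = (\<Sum>z\<in>UNIV \<times> UNIV. A y1 (fst z) * B y2 (snd z) * (C (fst z) x1 * D (snd z) x2))"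
    unfolding qcomp_def qtensor_def by (simp add: case_prod_beta)
  also have "\<dots> = (\<Sum>z1\<in>UNIV. \<Sum>z2\<in>UNIV. A y1 z1 * B y2 z2 * (C z1 x1 * D z2 x2))"
    by (simp add: sum.cartesian_product case_prod_beta)
  also have "\<dots> = qtensor (qcomp A C) (qcomp B D) (y1, y2) (x1, x2)"
    unfolding qcomp_def qtensor_def by (simp add: sum_product mult_ac)
  finally show "qcomp (qtensor A B) (qtensor C D) (y1, y2) (x1, x2) = qtensor (qcomp A C) (qcomp B D) (y1, y2) (x1, x2)" .
qed

lemma qtensor_qid: "qtensor qid qid = qid"
  unfolding qtensor_def qid_def by (auto intro!: ext)

lemma unitary_tensor:
  fixes A :: "('a::finite) qop" and B :: "('b::finite) qop"
  assumes "qcomp (qadj A) A = qid" "qcomp A (qadj A) = qid" "qcomp (qadj B) B = qid" "qcomp B (qadj B) = qid"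
  shows "qcomp (qadj (qtensor A B)) (qtensor A B) = qid" "qcomp (qtensor A B) (qadj (qtensor A B)) = qid"
  using assms by (simp_all add: qadj_tensor qcomp_tensor qtensor_qid)


definition PP :: "('r \<Rightarrow> 'r \<Rightarrow> complex) \<Rightarrow> ('p::finite \<Rightarrow> 'r) \<Rightarrow> ('q::finite \<Rightarrow> 'r) \<Rightarrow> ('p \<Rightarrow> 'r) \<Rightarrow> ('q \<Rightarrow> 'r) \<Rightarrow> complex" where
  "PP F a c b d = (\<Prod>p\<in>UNIV. F (a p) (b p)) * (\<Prod>q\<in>UNIV. cnj (F (c q) (d q)))"

lemma one_step:
  fixes F :: "('r::comm_ring_1) \<Rightarrow> 'r \<Rightarrow> complex"
  assumes H: "\<And>s a b c d. F a b * cnj (F c d) = F a (b + s*c) * cnj (F c (d + s*a))"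
  shows "PP F a c b d = PP F a c (b(p := b p + s * c q)) (d(q := d q + s * a p))"
proof -
  have e1: "(\<Prod>p'\<in>UNIV. F (a p') (b p')) = F (a p) (b p) * (\<Prod>p'\<in>UNIV-{p}. F (a p') (b p'))"
    by (simp add: prod.remove)
  have e2: "(\<Prod>p'\<in>UNIV. F (a p') ((b(p := b p + s * c q)) p')) = F (a p) (b p + s * c q) * (\<Prod>p'\<in>UNIV-{p}. F (a p') (b p'))"
    by (subst prod.remove[of UNIV p]) (auto intro!: prod.cong)
  have e3: "(\<Prod>q'\<in>UNIV. cnj (F (c q') (d q'))) = cnj (F (c q) (d q)) * (\<Prod>q'\<in>UNIV-{q}. cnj (F (c q') (d q')))"
    by (simp add: prod.remove del: cnj_prod)
  have e4: "(\<Prod>q'\<in>UNIV. cnj (F (c q') ((d(q := d q + s * a p)) q'))) = cnj (F (c q) (d q + s * a p)) * (\<Prod>q'\<in>UNIV-{q}. cnj (F (c q') (d q')))"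
    by (subst prod.remove[of UNIV q]) (auto intro!: prod.cong simp del: cnj_prod)
  show ?thesis unfolding PP_def e1 e2 e3 e4
    using H[of "a p" "b p" "c q" "d q" s] by (simp add: mult_ac)
qed

lemma multi_step:
  fixes F :: "('r::comm_ring_1) \<Rightarrow> 'r \<Rightarrow> complex"
  assumes H: "\<And>s a b c d. F a b * cnj (F c d) = F a (b + s*c) * cnj (F c (d + s*a))"
    and T: "finite T"
  shows "PP F a c b d = PP F a c (\<lambda>p. b p + (\<Sum>t\<in>T. if \<pi> t = p then \<sigma> t * c (\<kappa> t) else 0))
                                  (\<lambda>q. d q + (\<Sum>t\<in>T. if \<kappa> t = q then \<sigma> t * a (\<pi> t) else 0))"
  using T
proof (induction T rule: finite_induct)
  case empty
  then show ?case by simp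
next
  case (insert t T)
  let ?b = "\<lambda>p. b p + (\<Sum>t\<in>T. if \<pi> t = p then \<sigma> t * c (\<kappa> t) else 0)"
  let ?d = "\<lambda>q. d q + (\<Sum>t\<in>T. if \<kappa> t = q then \<sigma> t * a (\<pi> t) else 0)"
  have "(\<lambda>p. b p + (\<Sum>t\<in>insert t T. if \<pi> t = p then \<sigma> t * c (\<kappa> t) else 0)) = ?b(\<pi> t := ?b (\<pi> t) + \<sigma> t * c (\<kappa> t))"
    using insert by (auto intro!: ext simp: algebra_simps)
  moreover have "(\<lambda>q. d q + (\<Sum>t\<in>insert t T. if \<kappa> t = q then \<sigma> t * a (\<pi> t) else 0)) = ?d(\<kappa> t := ?d (\<kappa> t) + \<sigma> t * a (\<pi> t))"
    using insert by (auto intro!: ext simp: algebra_simps)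
  ultimately show ?case using insert.IH one_step[OF H, of a c ?b ?d "\<pi> t" "\<sigma> t" "\<kappa> t"] by simp
qed

lemma sum_prod_bij:
  fixes h :: "'p::finite \<Rightarrow> 'r::finite \<Rightarrow> complex" and e :: "'z \<Rightarrow> 'p \<Rightarrow> 'r"
  assumes b: "bij_betw \<Phi> UNIV (UNIV::'z set)" and e: "\<And>f p. e (\<Phi> f) p = f p"
  shows "(\<Sum>Z\<in>UNIV. \<Prod>p\<in>UNIV. h p (e Z p)) = (\<Prod>p\<in>UNIV. \<Sum>z\<in>UNIV. h p z)"
proof -
  have "(\<Sum>Z\<in>UNIV. \<Prod>p\<in>UNIV. h p (e Z p)) = (\<Sum>f\<in>UNIV. \<Prod>p\<in>UNIV. h p (e (\<Phi> f) p))"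
    using sum.reindex_bij_betw[OF b, of "\<lambda>Z. \<Prod>p\<in>UNIV. h p (e Z p)"] by simp
  also have "\<dots> = (\<Sum>f\<in>PiE UNIV (\<lambda>_. UNIV). \<Prod>p\<in>UNIV. h p (f p))" by (simp add: e)
  also have "\<dots> = (\<Prod>p\<in>UNIV. \<Sum>z\<in>UNIV. h p z)" by (simp add: prod_sum_PiE)
  finally show ?thesis .
qed


lemma prod_ind: "(\<Prod>p\<in>(UNIV::'p::finite set). if P p then 1 else 0 :: complex) = (if \<forall>p. P p then 1 else 0)"
proof (cases "\<forall>p. P p")
  case True then show ?thesis by simp
next
  case False
  then obtain p where "\<not> P p" by blast
  then show ?thesis by (subst prod_zero) auto
qed

lemma qft_alt: "qft_mat F Z X = (\<Prod>p\<in>UNIV. F (Z $ fst p $ snd p) (X $ snd p $ fst p))"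
  unfolding qft_mat_def by (simp add: case_prod_beta)

lemma bij1: "bij_betw (\<lambda>f::('m::finite \<times> 'm) \<Rightarrow> 'r. \<chi> i j. f (i, j)) UNIV UNIV"
  by (rule bij_betwI[where g="\<lambda>Z p. Z $ fst p $ snd p"]) (auto simp: vec_eq_iff)

lemma bij2: "bij_betw (\<lambda>f::('m::finite \<times> 'm) \<Rightarrow> 'r. \<chi> i j. f (j, i)) UNIV UNIV"
  by (rule bij_betwI[where g="\<lambda>Z p. Z $ snd p $ fst p"]) (auto simp: vec_eq_iff)

lemma qft_unitary:
  fixes F :: "('r::finite) qop"
  assumes "unitary_op F"
  shows "qcomp (qadj (qft_mat F)) (qft_mat F :: ('r^'m::finite^'m) qop) = qid"
    "qcomp (qft_mat F) (qadj (qft_mat F) :: ('r^'m::finite^'m) qop) = qid"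
proof -
  have u1: "\<And>y x. (\<Sum>z\<in>UNIV. cnj (F z y) * F z x) = (if y = x then 1 else 0)"
    using assms unfolding unitary_op_def qcomp_def qadj_def qid_def by metis
  have u2: "\<And>y x. (\<Sum>z\<in>UNIV. F y z * cnj (F x z)) = (if y = x then 1 else 0)"
    using assms unfolding unitary_op_def qcomp_def qadj_def qid_def by metis
  show "qcomp (qadj (qft_mat F)) (qft_mat F :: ('r^'m::finite^'m) qop) = qid"
  proof (intro ext)
    fix Y X :: "'r^'m^'m"
    have "qcomp (qadj (qft_mat F)) (qft_mat F) Y X =
       (\<Sum>Z\<in>UNIV. \<Prod>p\<in>UNIV. (\<lambda>p z. cnj (F z (Y $ snd p $ fst p)) * F z (X $ snd p $ fst p)) p (Z $ fst p $ snd p))"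
      unfolding qcomp_def qadj_def qft_alt by (simp add: prod.distrib)
    also have "\<dots> = (\<Prod>p\<in>UNIV. \<Sum>z\<in>UNIV. cnj (F z (Y $ snd p $ fst p)) * F z (X $ snd p $ fst p))"
      by (rule sum_prod_bij[OF bij1]) simp
    also have "\<dots> = qid Y X"
      by (simp add: u1 prod_ind qid_def vec_eq_iff)
    finally show "qcomp (qadj (qft_mat F)) (qft_mat F) Y X = qid Y X" .
  qed
  show "qcomp (qft_mat F) (qadj (qft_mat F) :: ('r^'m::finite^'m) qop) = qid"
  proof (intro ext)
    fix Y X :: "'r^'m^'m"
    have "qcomp (qft_mat F) (qadj (qft_mat F)) Y X =
       (\<Sum>Z\<in>UNIV. \<Prod>p\<in>UNIV. (\<lambda>p z. F (Y $ fst p $ snd p) z * cnj (F (X $ fst p $ snd p) z)) p (Z $ snd p $ fst p))"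
      unfolding qcomp_def qadj_def qft_alt by (simp add: prod.distrib)
    also have "\<dots> = (\<Prod>p\<in>UNIV. \<Sum>z\<in>UNIV. F (Y $ fst p $ snd p) z * cnj (F (X $ fst p $ snd p) z))"
      by (rule sum_prod_bij[OF bij2]) simp
    also have "\<dots> = qid Y X"
      by (simp add: u2 prod_ind qid_def vec_eq_iff)
    finally show "qcomp (qft_mat F) (qadj (qft_mat F)) Y X = qid Y X" .
  qed
qed


lemma shift_b:
  fixes g :: "'m::finite \<Rightarrow> 'a::comm_ring_1" and i j :: 'm
  shows "(\<Sum>t\<in>UNIV. if (fst t, fst (snd t)) = (i, j) then g (snd (snd t)) else 0) = (\<Sum>k\<in>UNIV. g k)"
proof -
  have "(\<Sum>t\<in>UNIV. if (fst t, fst (snd t)) = (i, j) then g (snd (snd t)) else 0) =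
        sum (\<lambda>t. g (snd (snd t))) {t\<in>UNIV. (fst t, fst (snd t)) = (i, j)}"
    by (rule sum.inter_filter[symmetric]) simp
  also have "{t\<in>UNIV. (fst t, fst (snd t)) = (i, j)} = range (\<lambda>k::'m. (i, j, k))" by auto
  also have "sum (\<lambda>t. g (snd (snd t))) \<dots> = (\<Sum>k\<in>UNIV. g k)"
    by (subst sum.reindex) (auto simp: inj_on_def)
  finally show ?thesis .
qed

lemma shift_d:
  fixes g :: "'m::finite \<Rightarrow> 'a::comm_ring_1" and j k :: 'm
  shows "(\<Sum>t\<in>UNIV. if (fst (snd t), snd (snd t)) = (j, k) then g (fst t) else 0) = (\<Sum>i\<in>UNIV. g i)"
proof -
  have "(\<Sum>t\<in>UNIV. if (fst (snd t), snd (snd t)) = (j, k) then g (fst t) else 0) =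
        sum (\<lambda>t. g (fst t)) {t\<in>UNIV. (fst (snd t), snd (snd t)) = (j, k)}"
    by (rule sum.inter_filter[symmetric]) simp
  also have "{t\<in>UNIV. (fst (snd t), snd (snd t)) = (j, k)} = range (\<lambda>i::'m. (i, j, k))" by auto
  also have "sum (\<lambda>t. g (fst t)) \<dots> = (\<Sum>i\<in>UNIV. g i)"
    by (subst sum.reindex) (auto simp: inj_on_def)
  finally show ?thesis .
qed

theorem mainTheorem5:
  fixes F :: "('r::{comm_ring_1, finite}) qop"
    and S :: "'r^'m::finite^'m"
  assumes "unitary_op F"
    and "\<forall>s::'r. qcomp (qcomp (qtensor (qadj F) F) (A_op s)) (qtensor F (qadj F)) = B_op s"
  shows "qcomp (qcomp (qtensor (qadj (qft_mat F)) (qft_mat F)) (L_op S))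
           (qtensor (qft_mat F) (qadj (qft_mat F))) = R'_op S"
proof -
  have uF1: "qcomp (qadj F) F = qid" and uF2: "qcomp F (qadj F) = qid"
    using assms(1) unfolding unitary_op_def by auto
  have uV: "qcomp (qadj (qtensor F (qadj F))) (qtensor F (qadj F)) = qid"
       "qcomp (qtensor F (qadj F)) (qadj (qtensor F (qadj F))) = qid"
    using unitary_tensor[of F "qadj F"] uF1 uF2 by auto
  have H: "F a b * cnj (F c d) = F a (b + s*c) * cnj (F c (d + s*a))" for s a b c d
  proof -
    have bA: "bij (\<lambda>(x::'r, y). (x, y + s * x))"
      by (rule o_bij[where g="\<lambda>(x, y). (x, y - s * x)"]) (auto simp: fun_eq_iff)
    have "qcomp (qcomp (qadj (qtensor F (qadj F))) (A_op s)) (qtensor F (qadj F)) = B_op s"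
      using assms(2) by (simp add: qadj_tensor)
    then have "\<forall>z x. qtensor F (qadj F) z x = qtensor F (qadj F) ((\<lambda>(x, y). (x, y + s * x)) z) ((\<lambda>(x, y). (x + s * y, y)) x)"
      unfolding A_op_def B_op_def using conj_iff[OF uV bA] by blast
    from spec[OF spec[OF this, of "(a, d)"], of "(b, c)"]
    show ?thesis by (simp add: qtensor_def qadj_def mult_ac)
  qed
  let ?G = "qft_mat F :: ('r^'m^'m) qop"
  have uG1: "qcomp (qadj ?G) ?G = qid" and uG2: "qcomp ?G (qadj ?G) = qid"
    using qft_unitary[OF assms(1)] by auto
  have uW: "qcomp (qadj (qtensor ?G (qadj ?G))) (qtensor ?G (qadj ?G)) = qid"
       "qcomp (qtensor ?G (qadj ?G)) (qadj (qtensor ?G (qadj ?G))) = qid"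
    using unitary_tensor[of ?G "qadj ?G"] uG1 uG2 by auto
  have bL: "bij (\<lambda>(X::'r^'m^'m, Y). (X, Y + S ** X))"
    by (rule o_bij[where g="\<lambda>(X, Y). (X, Y - S ** X)"]) (auto simp: fun_eq_iff)
  have key: "?G Z1 X1 * cnj (?G X2 Z2) = ?G Z1 (X1 + X2 ** S) * cnj (?G X2 (Z2 + S ** Z1))" for Z1 X1 X2 Z2
  proof -
    define a where "a = (\<lambda>p::'m\<times>'m. Z1 $ fst p $ snd p)"
    define b where "b = (\<lambda>p::'m\<times>'m. X1 $ snd p $ fst p)"
    define c where "c = (\<lambda>q::'m\<times>'m. X2 $ fst q $ snd q)"
    define d where "d = (\<lambda>q::'m\<times>'m. Z2 $ snd q $ fst q)"
    have "?G Z1 X1 * cnj (?G X2 Z2) = PP F a c b d"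
      unfolding PP_def qft_alt a_def b_def c_def d_def by simp
    also have "\<dots> = PP F a c (\<lambda>p. b p + (\<Sum>t\<in>UNIV. if (\<lambda>t. (fst t, fst (snd t))) t = p then (\<lambda>t. S $ snd (snd t) $ fst t) t * c ((\<lambda>t. (fst (snd t), snd (snd t))) t) else 0))
                                  (\<lambda>q. d q + (\<Sum>t\<in>UNIV. if (\<lambda>t. (fst (snd t), snd (snd t))) t = q then (\<lambda>t. S $ snd (snd t) $ fst t) t * a ((\<lambda>t. (fst t, fst (snd t))) t) else 0))"
      by (rule multi_step[OF H]) simp
    also have "\<dots> = ?G Z1 (X1 + X2 ** S) * cnj (?G X2 (Z2 + S ** Z1))"
    proof -
      have 1: "(\<lambda>p. b p + (\<Sum>t\<in>UNIV. if (fst t, fst (snd t)) = p then S $ snd (snd t) $ fst t * c (fst (snd t), snd (snd t)) else 0))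
             = (\<lambda>p. (X1 + X2 ** S) $ snd p $ fst p)"
      proof
        fix p :: "'m \<times> 'm"
        obtain i j where p: "p = (i, j)" by (cases p)
        show "b p + (\<Sum>t\<in>UNIV. if (fst t, fst (snd t)) = p then S $ snd (snd t) $ fst t * c (fst (snd t), snd (snd t)) else 0)
             = (X1 + X2 ** S) $ snd p $ fst p"
          unfolding p b_def c_def using shift_b[of i j "\<lambda>k. S $ k $ i * X2 $ j $ k"]
          by (simp add: matrix_matrix_mult_def mult.commute cong: if_cong)
      qed
      have 2: "(\<lambda>q. d q + (\<Sum>t\<in>UNIV. if (fst (snd t), snd (snd t)) = q then S $ snd (snd t) $ fst t * a (fst t, fst (snd t)) else 0))
             = (\<lambda>q. (Z2 + S ** Z1) $ snd q $ fst q)"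
      proof
        fix q :: "'m \<times> 'm"
        obtain j k where q: "q = (j, k)" by (cases q)
        show "d q + (\<Sum>t\<in>UNIV. if (fst (snd t), snd (snd t)) = q then S $ snd (snd t) $ fst t * a (fst t, fst (snd t)) else 0)
             = (Z2 + S ** Z1) $ snd q $ fst q"
          unfolding q d_def a_def using shift_d[of j k "\<lambda>i. S $ k $ i * Z1 $ i $ j"]
          by (simp add: matrix_matrix_mult_def cong: if_cong)
      qed
      show ?thesis by (simp only: 1 2) (simp add: PP_def qft_alt a_def c_def)
    qed
    finally show ?thesis .
  qed
  have "qcomp (qcomp (qadj (qtensor ?G (qadj ?G))) (L_op S)) (qtensor ?G (qadj ?G)) = R'_op S"
    unfolding L_op_def R'_op_def
  proof (subst conj_iff[OF uW bL], intro allI)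
    fix z x :: "('r^'m^'m) \<times> ('r^'m^'m)"
    obtain Z1 Z2 where z: "z = (Z1, Z2)" by (cases z)
    obtain X1 X2 where x: "x = (X1, X2)" by (cases x)
    show "qtensor ?G (qadj ?G) z x = qtensor ?G (qadj ?G) ((\<lambda>(X, Y). (X, Y + S ** X)) z) ((\<lambda>(X, Y). (X + Y ** S, Y)) x)"
      unfolding z x using key[of Z1 X1 X2 Z2] by (simp add: qtensor_def qadj_def)
  qed
  then show ?thesis by (simp add: qadj_tensor)
qed

end
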